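(* Let $N\ge2$ and $(b,a)\in\mathcal{M}=\mathbb{R}^N\times\mathbb{R}_{>0}^N$. Then for all $\lambda$ and both choices of sign, \[ \Delta_\lambda(S(b,a))\mp2=(-1)^N\Delta_{-\lambda}(b,a)\mp2, \] and consequently $\dot\Delta_\lambda(S(b,a))=(-1)^{N+1}\dot\Delta_{-\lambda}(b,a)$, where $\dot\Delta_\lambda=\partial_\lambda\Delta_\lambda$, and $\Delta_\lambda^2(S(b,a))-4=\Delta_{-\lambda}^2(b,a)-4$.
   Context: Indices of $(b,a)$ are mod $N$; $S(b,a)=(b',a')$ with $b'_j=-b_{N-j}$, $a'_j=a_{N-j-1}$. For $(b,a)\in\mathcal{M}$, let $y_1(k,\lambda),y_2(k,\lambda)$ be the solutions of $a_{k-1}y(k-1)+b_ky(k)+a_ky(k+1)=\lambda y(k)$ ($k\in\mathbb{Z}$) with $y_1(0)=1,y_1(1)=0,y_2(0)=0,y_2(1)=1$; the discriminant is $\Delta_\lambda(b,a)=y_1(N,\lambda)+y_2(N+1,\lambda)$, a polynomial in $\lambda$ of degree $N$. *)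

theory Defs
  imports "HOL-Analysis.Analysis"
begin

text \<open>A point (b,a) of M = R^N x R_{>0}^N is represented by two functions
  b a :: nat => real; only the values at indices 0..N-1 matter, all indices
  are read mod N.\<close>

text \<open>Solution of a_{k-1} y(k-1) + b_k y(k) + a_k y(k+1) = lam y(k) with
  y(0) = u0, y(1) = u1, computed forward for k >= 0 (a_k > 0, so it is
  uniquely determined).\<close>
fun jsol :: "nat \<Rightarrow> (nat \<Rightarrow> real) \<Rightarrow> (nat \<Rightarrow> real) \<Rightarrow> complex \<Rightarrow> complex \<Rightarrow> complex \<Rightarrow> nat \<Rightarrow> complex" where
  "jsol N b a u0 u1 lam 0 = u0"
| "jsol N b a u0 u1 lam (Suc 0) = u1"
| "jsol N b a u0 u1 lam (Suc (Suc k)) =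
     ((lam - of_real (b (Suc k mod N))) * jsol N b a u0 u1 lam (Suc k)
       - of_real (a (k mod N)) * jsol N b a u0 u1 lam k) / of_real (a (Suc k mod N))"

definition discr :: "nat \<Rightarrow> (nat \<Rightarrow> real) \<Rightarrow> (nat \<Rightarrow> real) \<Rightarrow> complex \<Rightarrow> complex" where
  "discr N b a lam = jsol N b a 1 0 lam N + jsol N b a 0 1 lam (N + 1)"

definition Sb :: "nat \<Rightarrow> (nat \<Rightarrow> real) \<Rightarrow> nat \<Rightarrow> real" where
  "Sb N b j = - b ((N - j mod N) mod N)"

definition Sa :: "nat \<Rightarrow> (nat \<Rightarrow> real) \<Rightarrow> nat \<Rightarrow> real" where
  "Sa N a j = a ((N - j mod N - 1) mod N)"

end

theory Submission imports Defs begin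

datatype m2 = M2 (e11: complex) (e12: complex) (e21: complex) (e22: complex)

definition mmul :: "m2 \<Rightarrow> m2 \<Rightarrow> m2" where
 "mmul X Y = M2 (e11 X*e11 Y + e12 X*e21 Y) (e11 X*e12 Y + e12 X * e22 Y)
                (e21 X*e11 Y + e22 X*e21 Y) (e21 X*e12 Y + e22 X*e22 Y)"
definition mid :: m2 where "mid = M2 1 0 0 1"
definition mtr :: "m2 \<Rightarrow> complex" where "mtr X = e11 X + e22 X"
definition mT :: "m2 \<Rightarrow> m2" where "mT X = M2 (e11 X) (e21 X) (e12 X) (e22 X)"
definition msc :: "complex \<Rightarrow> m2 \<Rightarrow> m2" where "msc c X = M2 (c*e11 X) (c*e12 X) (c*e21 X) (c*e22 X)"

lemma mmul_assoc: "mmul (mmul X Y) Z = mmul X (mmul Y Z)"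
  by (simp add: mmul_def algebra_simps)
lemma mmul_id: "mmul mid X = X" "mmul X mid = X"
  by (simp_all add: mmul_def mid_def)
lemma mtr_comm: "mtr (mmul X Y) = mtr (mmul Y X)"
  by (simp add: mmul_def mtr_def algebra_simps)
lemma mT_mul: "mT (mmul X Y) = mmul (mT Y) (mT X)"
  by (simp add: mmul_def mT_def algebra_simps)
lemma mtr_T: "mtr (mT X) = mtr X" by (simp add: mtr_def mT_def)
lemma msc_mul: "mmul (msc c X) (msc d Y) = msc (c*d) (mmul X Y)"
  by (simp add: mmul_def msc_def algebra_simps)
lemma mtr_sc: "mtr (msc c X) = c * mtr X" by (simp add: mtr_def msc_def algebra_simps)
lemma msc1: "msc 1 X = X" by (simp add: msc_def)

fun mprod :: "(nat \<Rightarrow> m2) \<Rightarrow> nat \<Rightarrow> m2" where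
  "mprod F 0 = mid"
| "mprod F (Suc n) = mmul (F n) (mprod F n)"

fun mprodR :: "(nat \<Rightarrow> m2) \<Rightarrow> nat \<Rightarrow> m2" where
  "mprodR F 0 = mid"
| "mprodR F (Suc n) = mmul (mprodR F n) (F n)"

lemma mprod_cong: "(\<And>k. k < n \<Longrightarrow> F k = G k) \<Longrightarrow> mprod F n = mprod G n"
  by (induction n) auto
lemma mprodR_cong: "(\<And>k. k < n \<Longrightarrow> F k = G k) \<Longrightarrow> mprodR F n = mprodR G n"
  by (induction n) auto

lemma mprod_sc: "mprod (\<lambda>k. msc (c k) (mT (F k))) n = msc (\<Prod>k<n. c k) (mT (mprodR F n))"
proof (induction n)
  case 0 then show ?case by (simp add: mid_def mT_def msc_def)
next
  case (Suc n)
  then show ?case by (simp add: msc_mul mT_mul mult.commute)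
qed

lemma mprodR_rev: "n \<le> m \<Longrightarrow> mmul (mprodR (\<lambda>k. G (m - 1 - k)) n) (mprod G (m - n)) = mprod G m"
proof (induction n)
  case 0 then show ?case by (simp add: mmul_id)
next
  case (Suc n)
  have e: "m - n = Suc (m - Suc n)" using Suc.prems by simp
  have "mprod G (m - n) = mmul (G (m - 1 - n)) (mprod G (m - Suc n))"
    by (simp add: e)
  then show ?case using Suc by (simp add: mmul_assoc)
qed

definition Am :: "nat \<Rightarrow> (nat\<Rightarrow>real) \<Rightarrow> (nat\<Rightarrow>real) \<Rightarrow> complex \<Rightarrow> nat \<Rightarrow> m2" where
 "Am N b a lam k = M2 0 1 (- of_real (a (k mod N)) / of_real (a (Suc k mod N)))
     ((lam - of_real (b (Suc k mod N))) / of_real (a (Suc k mod N)))"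

lemma jsol_mprod:
  "jsol N b a u0 u1 lam n = e11 (mprod (Am N b a lam) n) * u0 + e12 (mprod (Am N b a lam) n) * u1
 \<and> jsol N b a u0 u1 lam (Suc n) = e21 (mprod (Am N b a lam) n) * u0 + e22 (mprod (Am N b a lam) n) * u1"
proof (induction n)
  case 0 then show ?case by (simp add: mid_def)
next
  case (Suc n)
  then show ?case
    by (simp add: mmul_def Am_def algebra_simps diff_divide_distrib add_divide_distrib)
qed

lemma discr_tr: "discr N b a lam = mtr (mprod (Am N b a lam) N)"
  using jsol_mprod[of N b a 1 0 lam N] jsol_mprod[of N b a 0 1 lam N]
  by (simp add: discr_def mtr_def)

lemma prod_shift_mod:
  fixes f :: "nat \<Rightarrow> 'a::comm_monoid_mult"
  assumes "N > 0" shows "(\<Prod>k<N. f (Suc k mod N)) = (\<Prod>k<N. f (k mod N))"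
proof -
  obtain m where N: "N = Suc m" using assms by (cases N) auto
  have "(\<Prod>k<N. f (Suc k mod N)) = (\<Prod>k<m. f (Suc k mod N)) * f (N mod N)"
    by (simp add: N)
  also have "\<dots> = f (0 mod N) * (\<Prod>k<m. f (Suc k mod N))" by (simp add: mult.commute)
  also have "\<dots> = (\<Prod>k<N. f (k mod N))"
    unfolding N by (subst prod.lessThan_Suc_shift) (simp add: mult.commute)
  finally show ?thesis .
qed

definition jj :: "nat \<Rightarrow> nat \<Rightarrow> nat" where
  "jj N k = (if Suc k < N then N - 2 - k else N - 1)"

lemma idx:
  assumes "N \<ge> 2" "k < N"
  shows "Sa N a (k mod N) = a (Suc (jj N k) mod N)
    \<and> Sa N a (Suc k mod N) = a (jj N k mod N)
    \<and> Sb N b (Suc k mod N) = - b (Suc (jj N k) mod N)"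
proof (cases "Suc k < N")
  case True
  have m1: "k mod N = k" "Suc k mod N = Suc k" using True by auto
  have j: "jj N k = N - 2 - k" using True by (simp add: jj_def)
  have q1: "(N - k - 1) mod N = N - 1 - k" using assms by simp
  have q2: "Suc (N - 2 - k) mod N = N - 1 - k" using True by simp
  have q3: "(N - Suc k - 1) mod N = N - 2 - k" using assms by simp
  have q4: "(N - 2 - k) mod N = N - 2 - k" using assms by simp
  have q5: "(N - Suc k) mod N = N - 1 - k" using assms by simp
  show ?thesis unfolding m1 j Sa_def Sb_def q1 q2 q3 q4 q5 by simp
next
  case False
  then have k: "k = N - 1" using assms by simp
  have m1: "k mod N = N - 1" "Suc k mod N = 0" using k assms by auto
  have j: "jj N k = N - 1" using False by (simp add: jj_def)
  have q1: "(N - (N - 1) - 1) mod N = 0" using assms by simp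
  have q2: "Suc (N - 1) mod N = 0" using assms by simp
  have q3: "(N - 0 - 1) mod N = N - 1" using assms by simp
  have q4: "(N - 1) mod N = N - 1" using assms by simp
  have q5: "(N - 0) mod N = 0" by simp
  have q6: "(N - Suc 0) mod N = N - Suc 0" using assms by simp
  show ?thesis unfolding m1 j Sa_def Sb_def q1 q2 q3 q4 q5 by (simp add: q6)
qed

lemma jj_lt: "N \<ge> 2 \<Longrightarrow> k < N \<Longrightarrow> jj N k < N" by (simp add: jj_def)

lemma Sa_pos: "N \<ge> 2 \<Longrightarrow> \<forall>j<N. a j > 0 \<Longrightarrow> Sa N a k > 0"
  by (simp add: Sa_def)

lemma AS_eq:
  assumes "N \<ge> 2" "\<forall>j<N. a j > 0" "k < N"
  shows "Am N (Sb N b) (Sa N a) lam k =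
    msc (- (of_real (Sa N a (k mod N)) / of_real (Sa N a (Suc k mod N)))) (mT (Am N b a (- lam) (jj N k)))"
proof -
  define j where "j = jj N k"
  have j: "j < N" using jj_lt assms by (auto simp: j_def)
  define x where "x = (of_real (a (Suc j mod N)) :: complex)"
  define y where "y = (of_real (a j) :: complex)"
  define z where "z = (of_real (b (Suc j mod N)) :: complex)"
  have x: "x \<noteq> 0" using assms(1,2) by (simp add: x_def less_imp_neq[symmetric])
  have y: "y \<noteq> 0" using assms j by (simp add: y_def less_imp_neq[symmetric])
  have e1: "of_real (Sa N a (k mod N)) = x" using idx[OF assms(1,3)] by (simp add: x_def j_def)
  have e2: "of_real (Sa N a (Suc k mod N)) = y" using idx[OF assms(1,3)] j by (simp add: y_def j_def)
  have e3: "of_real (Sb N b (Suc k mod N)) = - z" using idx[OF assms(1,3)] by (simp add: z_def j_def)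
  have A: "Am N b a (- lam) j = M2 0 1 (- y / x) ((- lam - z) / x)"
    using j by (simp add: Am_def x_def y_def z_def)
  have B: "Am N (Sb N b) (Sa N a) lam k = M2 0 1 (- x / y) ((lam + z) / y)"
    unfolding Am_def e1[symmetric] e2[symmetric] using e3 assms(3) by simp
  show ?thesis unfolding j_def[symmetric] A B e1 e2 msc_def mT_def using x y
    by (simp add: field_simps)
qed

lemma main_eq:
  assumes "N \<ge> 2" "\<forall>j<N. a j > 0"
  shows "discr N (Sb N b) (Sa N a) lam = (-1)^N * discr N b a (- lam)"
proof -
  define c where "c k = - (of_real (Sa N a (k mod N)) / of_real (Sa N a (Suc k mod N)) :: complex)" for k
  define F where "F k = Am N b a (- lam) (jj N k)" for k
  define G where "G = Am N b a (- lam)"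
  have s1: "discr N (Sb N b) (Sa N a) lam = mtr (mprod (\<lambda>k. msc (c k) (mT (F k))) N)"
    unfolding discr_tr c_def F_def
    by (rule arg_cong[where f=mtr], rule mprod_cong, rule AS_eq[OF assms])
  have s2: "mtr (mprod (\<lambda>k. msc (c k) (mT (F k))) N) = (\<Prod>k<N. c k) * mtr (mprodR F N)"
    by (simp add: mprod_sc mtr_sc mtr_T)
  have s3: "(\<Prod>k<N. c k) = (-1)^N"
  proof -
    have nz: "\<And>k. (of_real (Sa N a k) :: complex) \<noteq> 0" using Sa_pos[OF assms] by (simp add: less_imp_neq[symmetric])
    define X where "X k = (of_real (Sa N a (k mod N)) :: complex)" for k
    define Y where "Y k = (of_real (Sa N a (Suc k mod N)) :: complex)" for k
    have "(\<Prod>k<N. c k) = (\<Prod>k<N. (-1) * (X k / Y k))"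
      unfolding c_def X_def Y_def by simp
    also have "\<dots> = (\<Prod>k<N. (-1::complex)) * ((\<Prod>k<N. X k) / (\<Prod>k<N. Y k))"
      by (simp only: prod.distrib prod_dividef)
    finally have A: "(\<Prod>k<N. c k) = (\<Prod>k<N. (-1::complex)) * ((\<Prod>k<N. X k) / (\<Prod>k<N. Y k))" .
    have B: "(\<Prod>k<N. Y k) = (\<Prod>k<N. X k)"
      unfolding X_def Y_def using prod_shift_mod[of N "\<lambda>i. (of_real (Sa N a i) :: complex)"] assms by simp
    have C: "(\<Prod>k<N. X k) \<noteq> 0" unfolding X_def using nz by (simp add: prod_zero_iff)
    show ?thesis using A B C by simp
  qed
  have NS: "N = Suc (N - 1)" using assms by simp
  have s4: "mprodR F N = mmul (mprodR F (N - 1)) (G (N - 1))"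
  proof -
    have "mprodR F N = mmul (mprodR F (N - 1)) (F (N - 1))" using NS by (metis mprodR.simps(2))
    moreover have "F (N - 1) = G (N - 1)" using assms by (simp add: F_def G_def jj_def)
    ultimately show ?thesis by simp
  qed
  have s5: "mprodR F (N - 1) = mprodR (\<lambda>k. G (N - 1 - 1 - k)) (N - 1)"
    by (rule mprodR_cong) (simp add: F_def G_def jj_def)
  have s6: "mprodR (\<lambda>k. G (N - 1 - 1 - k)) (N - 1) = mprod G (N - 1)"
    using mprodR_rev[of "N - 1" "N - 1" G] by (simp add: mmul_id)
  have s7: "mtr (mmul (mprod G (N - 1)) (G (N - 1))) = mtr (mprod G N)"
  proof -
    have "mprod G N = mmul (G (N - 1)) (mprod G (N - 1))" using NS by (metis mprod.simps(2))
    then show ?thesis by (simp add: mtr_comm)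
  qed
  have s8: "mtr (mprod G N) = discr N b a (- lam)" unfolding G_def by (rule discr_tr[symmetric])
  have "mtr (mprodR F N) = mtr (mprod G N)" unfolding s4 s5 s6 s7 ..
  then show ?thesis unfolding s1 s2 s3 s8 by simp
qed

lemma jsol_diff:
  "(\<lambda>l. jsol N b a u0 u1 l n) field_differentiable (at z)
   \<and> (\<lambda>l. jsol N b a u0 u1 l (Suc n)) field_differentiable (at z)"
proof (induction n)
  case 0 then show ?case by simp
next
  case (Suc n)
  then have h0: "(\<lambda>l. jsol N b a u0 u1 l n) field_differentiable (at z)"
    and h1: "(\<lambda>l. jsol N b a u0 u1 l (Suc n)) field_differentiable (at z)" by auto
  have "(\<lambda>l. jsol N b a u0 u1 l (Suc (Suc n))) = (\<lambda>l. ((l - of_real (b (Suc n mod N))) * jsol N b a u0 u1 l (Suc n)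
       - of_real (a (n mod N)) * jsol N b a u0 u1 l n) * inverse (of_real (a (Suc n mod N))))"
    by (simp add: divide_inverse)
  moreover have "(\<lambda>l. ((l - of_real (b (Suc n mod N))) * jsol N b a u0 u1 l (Suc n)
       - of_real (a (n mod N)) * jsol N b a u0 u1 l n) * inverse (of_real (a (Suc n mod N)))) field_differentiable (at z)"
    by (intro field_differentiable_mult field_differentiable_diff field_differentiable_const field_differentiable_ident h0 h1)
  ultimately show ?case using h1 by simp
qed

lemma discr_diff: "discr N b a field_differentiable (at z)"
proof -
  have "discr N b a = (\<lambda>l. jsol N b a 1 0 l N + jsol N b a 0 1 l (Suc N))"
    by (rule ext) (simp add: discr_def)
  moreover have "(\<lambda>l. jsol N b a 1 0 l N + jsol N b a 0 1 l (Suc N)) field_differentiable (at z)"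
    using jsol_diff[of N b a 1 0 N z] jsol_diff[of N b a 0 1 N z]
    by (intro field_differentiable_add) auto
  ultimately show ?thesis by simp
qed

theorem corollary2p4:
  fixes N :: nat and b a :: "nat \<Rightarrow> real"
  assumes "N \<ge> 2" and "\<forall>j<N. a j > 0"
  shows "(\<forall>lam. discr N (Sb N b) (Sa N a) lam - 2 = (-1) ^ N * discr N b a (- lam) - 2
              \<and> discr N (Sb N b) (Sa N a) lam + 2 = (-1) ^ N * discr N b a (- lam) + 2)
       \<and> (\<forall>lam. deriv (discr N (Sb N b) (Sa N a)) lam = (-1) ^ (N + 1) * deriv (discr N b a) (- lam))
       \<and> (\<forall>lam. (discr N (Sb N b) (Sa N a) lam)\<^sup>2 - 4 = (discr N b a (- lam))\<^sup>2 - 4)"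
proof (intro conjI allI)
  fix lam
  show "discr N (Sb N b) (Sa N a) lam - 2 = (-1) ^ N * discr N b a (- lam) - 2"
    "discr N (Sb N b) (Sa N a) lam + 2 = (-1) ^ N * discr N b a (- lam) + 2"
    using main_eq[OF assms] by auto
next
  fix lam
  have F: "discr N (Sb N b) (Sa N a) = (\<lambda>l. (-1)^N * discr N b a (- l))"
    by (rule ext) (rule main_eq[OF assms])
  have D: "(discr N b a has_field_derivative deriv (discr N b a) (- lam)) (at (- lam))"
    using discr_diff DERIV_deriv_iff_field_differentiable by blast
  have "((\<lambda>l. discr N b a (- l)) has_field_derivative deriv (discr N b a) (- lam) * (- 1)) (at lam)"
  proof -
    have "(uminus has_field_derivative (-1)) (at lam)" by (auto intro!: derivative_eq_intros)
    from DERIV_chain2[OF D this] show ?thesis by simp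
  qed
  then have "((\<lambda>l. (-1)^N * discr N b a (- l)) has_field_derivative (-1)^N * (deriv (discr N b a) (- lam) * (- 1))) (at lam)"
    by (rule DERIV_cmult)
  then have "deriv (discr N (Sb N b) (Sa N a)) lam = (-1)^N * (deriv (discr N b a) (- lam) * (- 1))"
    unfolding F by (rule DERIV_imp_deriv)
  then show "deriv (discr N (Sb N b) (Sa N a)) lam = (-1) ^ (N + 1) * deriv (discr N b a) (- lam)"
    by simp
next
  fix lam
  have "((-1::complex)^N)\<^sup>2 = 1" by (simp add: power_mult[symmetric] mult.commute[of N])
  then show "(discr N (Sb N b) (Sa N a) lam)\<^sup>2 - 4 = (discr N b a (- lam))\<^sup>2 - 4"
    using main_eq[OF assms] by (simp add: power_mult_distrib)
qed

end
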